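(* Let $\alpha\in\mathbb N^n$ and let $\mathcal M$ be a matroid on $[n]$, regarded as a discrete polymatroid whose bases are $(0,1)$-vectors. If $\mathcal M$ satisfies White's conjecture, i.e. its toric ideal $I_{\mathcal M}$ is generated by quadratic binomials corresponding to double swaps, then $\mathcal M^\alpha$ satisfies White's conjecture, i.e. $I_{\mathcal M^\alpha}$ is generated by quadratic binomials corresponding to double swaps.
   Context: $K$ is a field, $\mathbb N$ the positive integers. For a discrete polymatroid (in particular a matroid) $P\subset\mathbb Z^n_+$ with set of bases $\mathcal B_P$ (the $\preceq$-maximal elements), $S_P=K[y_{\mathbf u}:\mathbf u\in\mathcal B_P]$ and $I_P$ is the kernel of the $K$-algebra map $S_P\to K[x_1,\ldots,x_n]$, $y_{\mathbf u}\mapsto x_1^{\mathbf u(1)}\cdots x_n^{\mathbf u(n)}$. A pair of bases $(\mathbf v_1,\mathbf v_2)$ is obtained from $(\mathbf u_1,\mathbf u_2)$ by a double swap if $\mathbf v_1=\mathbf u_1+\epsilon_j-\epsilon_i$, $\mathbf v_2=\mathbf u_2+\epsilon_i-\epsilon_j$ with $\mathbf u_1(i)>\mathbf u_2(i)$ and $\mathbf u_2(j)>\mathbf u_1(j)$; the corresponding binomial is $y_{\mathbf u_1}y_{\mathbf u_2}-y_{\mathbf v_1}y_{\mathbf v_2}$. For $\alpha=(k_1,\ldots,k_n)$, index coordinates of $\mathbb Z^{|\alpha|}$ by pairs $(i,j)$, $1\le j\le k_i$, let $\pi_0(\mathbf w)(i)=\sum_j\mathbf w(i,j)$, and $\mathbf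 u^\alpha=\{\mathbf w\in\mathbb Z^{|\alpha|}_+:\pi_0(\mathbf w)=\mathbf u\}$. $P^\alpha$ is the discrete polymatroid with set of bases $\bigcup_{\mathbf u\in\mathcal B_P}\mathbf u^\alpha$ (for a matroid these bases are again $(0,1)$-vectors, so $\mathcal M^\alpha$ is a matroid). *)

theory Defs
  imports "HOL-Library.Poly_Mapping"
begin

text \<open>Vectors in Z_+^E are functions 'a => nat vanishing outside the ground set E.\<close>

type_synonym ('v, 'k) mpoly = "('v \<Rightarrow>\<^sub>0 nat) \<Rightarrow>\<^sub>0 'k"

definition mvars :: "('v, 'k::zero) mpoly \<Rightarrow> 'v set" where
  "mvars p = \<Union> (Poly_Mapping.keys ` Poly_Mapping.keys p)"

definition Yvar :: "'v \<Rightarrow> ('v, 'k::{zero,one}) mpoly" where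
  "Yvar v = Poly_Mapping.single (Poly_Mapping.single v 1) 1"

definition poly_ring :: "'v set \<Rightarrow> ('v, 'k::zero) mpoly set" where
  "poly_ring V = {p. mvars p \<subseteq> V}"

definition gen_ideal :: "'v set \<Rightarrow> ('v, 'k::comm_ring_1) mpoly set \<Rightarrow> ('v, 'k) mpoly set" where
  "gen_ideal V G = {(\<Sum>g\<in>F. c g * g) | F c. finite F \<and> F \<subseteq> G \<and> (\<forall>g\<in>F. c g \<in> poly_ring V)}"

text \<open>Discrete polymatroid bases: image exponent of the monomial prod y_u^{m(u)}
  under y_u |-> x^u is sum_u m(u) u.\<close>
definition mono_image :: "(('a \<Rightarrow> nat) \<Rightarrow>\<^sub>0 nat) \<Rightarrow> ('a \<Rightarrow> nat)" where
  "mono_image m = (\<lambda>x. \<Sum>u\<in>Poly_Mapping.keys m. Poly_Mapping.lookup m u * u x)"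

text \<open>Coefficient function of the image in K[x] of p under the K-algebra map
  y_u |-> x^u (linear extension of the monomial map).\<close>
definition toric_image :: "('a \<Rightarrow> nat, 'k::comm_ring_1) mpoly \<Rightarrow> ('a \<Rightarrow> nat) \<Rightarrow> 'k" where
  "toric_image p = (\<lambda>e. \<Sum>m\<in>{m\<in>Poly_Mapping.keys p. mono_image m = e}. Poly_Mapping.lookup p m)"

definition toric_ideal :: "('a \<Rightarrow> nat) set \<Rightarrow> ('a \<Rightarrow> nat, 'k::comm_ring_1) mpoly set" where
  "toric_ideal B = {p \<in> poly_ring B. toric_image p = (\<lambda>_. 0)}"

definition double_swap_binomials :: "('a \<Rightarrow> nat) set \<Rightarrow> ('a \<Rightarrow> nat, 'k::comm_ring_1) mpoly set" where
  "double_swap_binomials B =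
     {Yvar u1 * Yvar u2 - Yvar v1 * Yvar v2 | u1 u2 v1 v2 i j.
        u1 \<in> B \<and> u2 \<in> B \<and> v1 \<in> B \<and> v2 \<in> B \<and>
        u1 i > u2 i \<and> u2 j > u1 j \<and>
        v1 = (\<lambda>x. if x = j then u1 x + 1 else if x = i then u1 x - 1 else u1 x) \<and>
        v2 = (\<lambda>x. if x = i then u2 x + 1 else if x = j then u2 x - 1 else u2 x)}"

definition white_property :: "'k::field itself \<Rightarrow> ('a \<Rightarrow> nat) set \<Rightarrow> bool" where
  "white_property (_ :: 'k itself) B \<longleftrightarrow>
     (toric_ideal B :: ('a \<Rightarrow> nat, 'k) mpoly set) = gen_ideal B (double_swap_binomials B)"

text \<open>Set of bases of a matroid on ground set E, regarded as a discrete polymatroid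
  whose bases are (0,1)-vectors (basis exchange in polymatroid form).\<close>
definition matroid_bases :: "'a set \<Rightarrow> ('a \<Rightarrow> nat) set \<Rightarrow> bool" where
  "matroid_bases E B \<longleftrightarrow>
     B \<noteq> {} \<and>
     (\<forall>u\<in>B. (\<forall>x. x \<notin> E \<longrightarrow> u x = 0) \<and> (\<forall>x\<in>E. u x \<le> 1)) \<and>
     (\<forall>u\<in>B. \<forall>v\<in>B. \<forall>i. u i > v i \<longrightarrow>
        (\<exists>j. v j > u j \<and> (\<lambda>x. if x = j then u x + 1 else if x = i then u x - 1 else u x) \<in> B))"

text \<open>Ground set of P^alpha, alpha = (k_0,...,k_{n-1}): pairs (i,j), i<n, 1<=j<=k_i.\<close>
definition alpha_ground :: "nat \<Rightarrow> (nat \<Rightarrow> nat) \<Rightarrow> (nat \<times> nat) set" where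
  "alpha_ground n k = {(i, j). i < n \<and> 1 \<le> j \<and> j \<le> k i}"

definition pi0 :: "(nat \<Rightarrow> nat) \<Rightarrow> (nat \<times> nat \<Rightarrow> nat) \<Rightarrow> nat \<Rightarrow> nat" where
  "pi0 k w = (\<lambda>i. \<Sum>j\<in>{1..k i}. w (i, j))"

text \<open>Set of bases of P^alpha: union of u^alpha over bases u of P.\<close>
definition alpha_bases :: "nat \<Rightarrow> (nat \<Rightarrow> nat) \<Rightarrow> (nat \<Rightarrow> nat) set \<Rightarrow> (nat \<times> nat \<Rightarrow> nat) set" where
  "alpha_bases n k B = {w. (\<forall>x. x \<notin> alpha_ground n k \<longrightarrow> w x = 0) \<and> pi0 k w \<in> B}"

end

theory Submission
  imports Defs
begin


abbreviation (input) sg where "sg \<equiv> Poly_Mapping.single"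
abbreviation (input) lk where "lk \<equiv> Poly_Mapping.lookup"
abbreviation (input) ks where "ks \<equiv> Poly_Mapping.keys"

lemma pm_expand: "p = (\<Sum>t\<in>ks p. sg t (lk p t))"
  by (rule poly_mapping_eqI) (simp add: lookup_sum lookup_single when_def in_keys_iff)

definition Lf :: "(('v \<Rightarrow>\<^sub>0 nat) \<Rightarrow> 'k::comm_ring_1) \<Rightarrow> ('v, 'k) mpoly \<Rightarrow> 'k" where
  "Lf \<phi> p = (\<Sum>t\<in>ks p. lk p t * \<phi> t)"

lemma Lf_superset: "finite S \<Longrightarrow> ks p \<subseteq> S \<Longrightarrow> Lf \<phi> p = (\<Sum>t\<in>S. lk p t * \<phi> t)"
  unfolding Lf_def by (rule sum.mono_neutral_left) (auto simp: in_keys_iff)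

lemma Lf_add: "Lf \<phi> (p + q) = Lf \<phi> p + Lf \<phi> q"
proof -
  let ?S = "ks p \<union> ks q"
  have "Lf \<phi> (p + q) = (\<Sum>t\<in>?S. lk (p+q) t * \<phi> t)"
    using keys_add[of p q] by (intro Lf_superset) auto
  also have "\<dots> = (\<Sum>t\<in>?S. lk p t * \<phi> t) + (\<Sum>t\<in>?S. lk q t * \<phi> t)"
    by (simp add: lookup_add distrib_right sum.distrib)
  also have "\<dots> = Lf \<phi> p + Lf \<phi> q"
    by (simp add: Lf_superset[symmetric])
  finally show ?thesis .
qed

lemma Lf_uminus: "Lf \<phi> (- p) = - Lf \<phi> p"
  unfolding Lf_def by (simp add: keys_minus sum_negf)

lemma Lf_diff: "Lf \<phi> (p - q) = Lf \<phi> p - Lf \<phi> q"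
  using Lf_add[of \<phi> p "-q"] by (simp add: Lf_uminus)

lemma Lf_zero[simp]: "Lf \<phi> 0 = 0"
  unfolding Lf_def by simp

lemma Lf_single[simp]: "Lf \<phi> (sg t c) = c * \<phi> t"
  unfolding Lf_def by simp

lemma Lf_sum: "Lf \<phi> (sum f F) = (\<Sum>i\<in>F. Lf \<phi> (f i))"
  by (induction F rule: infinite_finite_induct) (auto simp: Lf_add)

lemma mult_single_right: "(c::('v,'k::comm_ring_1) mpoly) * sg a 1 = (\<Sum>t\<in>ks c. sg (t + a) (lk c t))"
proof -
  have "c * sg a 1 = (\<Sum>t\<in>ks c. sg t (lk c t)) * sg a 1"
    by (subst pm_expand[of c]) simp
  also have "\<dots> = (\<Sum>t\<in>ks c. sg (t + a) (lk c t))"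
    by (simp add: sum_distrib_right mult_single)
  finally show ?thesis .
qed

lemma Lf_mult_single: "Lf \<phi> ((c::('v,'k::comm_ring_1) mpoly) * sg a 1) = (\<Sum>t\<in>ks c. lk c t * \<phi> (t + a))"
  by (simp add: mult_single_right Lf_sum)

lemma Lf_binom:
  assumes "\<And>t. \<phi> (t + a) = \<phi> (t + b)"
  shows "Lf \<phi> ((c::('v,'k::comm_ring_1) mpoly) * (sg a 1 - sg b 1)) = 0"
  by (simp add: right_diff_distrib Lf_diff Lf_mult_single assms)

lemma Lf_ideal:
  assumes "\<And>g. g \<in> G \<Longrightarrow> \<exists>a b. g = sg a 1 - sg b 1 \<and> (\<forall>t. \<phi> (t + a) = \<phi> (t + b))"
    and "p \<in> gen_ideal V G"
  shows "Lf \<phi> p = 0"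
proof -
  from assms(2) obtain F c where p: "p = (\<Sum>g\<in>F. c g * g)" and F: "F \<subseteq> G"
    unfolding gen_ideal_def by blast
  have "Lf \<phi> (c g * g) = 0" if gF: "g \<in> F" for g
  proof -
    obtain a b where "g = sg a 1 - sg b 1" "\<forall>t. \<phi> (t + a) = \<phi> (t + b)"
      using assms(1) F gF by blast
    then show ?thesis by (simp add: Lf_binom)
  qed
  then show ?thesis by (simp add: p Lf_sum)
qed

lemma toric_image_Lf: "toric_image p e = Lf (\<lambda>t. if mono_image t = e then 1 else 0) p"
  unfolding toric_image_def Lf_def by (auto simp: sum.inter_filter intro!: sum.cong)

lemma mvars_add: "mvars (p + q) \<subseteq> mvars p \<union> mvars q"
proof
  fix v assume "v \<in> mvars (p + q)"
  then obtain m where m: "m \<in> ks (p+q)" "v \<in> ks m" unfolding mvars_def by blast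
  have "m \<in> ks p \<union> ks q" using m(1) keys_add[of p q] by auto
  then show "v \<in> mvars p \<union> mvars q" using m(2) unfolding mvars_def by auto
qed

lemma mvars_uminus[simp]: "mvars (- (p::('v,'k::ab_group_add) mpoly)) = mvars p"
  unfolding mvars_def by (simp add: keys_minus)

lemma mvars_diff: "mvars ((p::('v,'k::ab_group_add) mpoly) - q) \<subseteq> mvars p \<union> mvars q"
  using mvars_add[of p "-q"] by simp

lemma mvars_mult: "mvars ((p::('v,'k::comm_ring_1) mpoly) * q) \<subseteq> mvars p \<union> mvars q"
proof
  fix v assume "v \<in> mvars (p * q)"
  then obtain m where m: "m \<in> ks (p*q)" "v \<in> ks m" unfolding mvars_def by blast
  have "m \<in> {a + b | a b. a \<in> ks p \<and> b \<in> ks q}" using m(1) keys_mult[of p q] by (rule subsetD[rotated])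
  then obtain a b where ab: "a \<in> ks p" "b \<in> ks q" "m = a + b" by auto
  have "v \<in> ks a \<union> ks b" using m(2) keys_add[of a b] ab(3) by auto
  then show "v \<in> mvars p \<union> mvars q" unfolding mvars_def using ab by auto
qed

lemma mvars_single: "mvars (sg m c) \<subseteq> ks m"
  unfolding mvars_def by auto

lemma mvars_keys: "ks p \<subseteq> ks q \<Longrightarrow> mvars p \<subseteq> mvars q"
  unfolding mvars_def by blast

lemma mvars_sum: "mvars (sum f F) \<subseteq> (\<Union>i\<in>F. mvars (f i))"
proof (induction F rule: infinite_finite_induct)
  case (insert x F)
  then show ?case using mvars_add[of "f x" "sum f F"] by auto
qed (auto simp: mvars_def)

lemma poly_ring_add: "p \<in> poly_ring V \<Longrightarrow> q \<in> poly_ring V \<Longrightarrow> p + q \<in> poly_ring V"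
  unfolding poly_ring_def using mvars_add[of p q] by auto
lemma poly_ring_diff: "(p::('v,'k::ab_group_add) mpoly) \<in> poly_ring V \<Longrightarrow> q \<in> poly_ring V \<Longrightarrow> p - q \<in> poly_ring V"
  unfolding poly_ring_def using mvars_diff[of p q] by auto
lemma poly_ring_mult: "(p::('v,'k::comm_ring_1) mpoly) \<in> poly_ring V \<Longrightarrow> q \<in> poly_ring V \<Longrightarrow> p * q \<in> poly_ring V"
  unfolding poly_ring_def using mvars_mult[of p q] by auto
lemma poly_ring_single: "ks m \<subseteq> V \<Longrightarrow> sg m c \<in> poly_ring V"
  unfolding poly_ring_def using mvars_single[of m c] by auto
lemma poly_ring_zero[simp]: "0 \<in> poly_ring V"
  unfolding poly_ring_def mvars_def by simp
lemma poly_ring_sum: "(\<And>i. i \<in> F \<Longrightarrow> f i \<in> poly_ring V) \<Longrightarrow> sum f F \<in> poly_ring V"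
proof -
  assume a: "\<And>i. i \<in> F \<Longrightarrow> f i \<in> poly_ring V"
  have "mvars (sum f F) \<subseteq> V" using mvars_sum[of f F] a unfolding poly_ring_def by blast
  then show ?thesis unfolding poly_ring_def by simp
qed

lemma gen_ideal_zero: "0 \<in> gen_ideal V G"
  unfolding gen_ideal_def by (rule CollectI, rule exI[of _ "{}"]) auto

lemma gen_ideal_gen: "g \<in> G \<Longrightarrow> g \<in> gen_ideal V G"
  unfolding gen_ideal_def
  by (rule CollectI, rule exI[of _ "{g}"], rule exI[of _ "\<lambda>_. 1"])
     (auto simp: poly_ring_def mvars_def)

lemma gen_ideal_add:
  assumes "p \<in> gen_ideal V G" "q \<in> gen_ideal V G"
  shows "p + q \<in> gen_ideal V G"
proof -
  obtain F1 c1 where 1: "p = (\<Sum>g\<in>F1. c1 g * g)" "finite F1" "F1 \<subseteq> G" "\<forall>g\<in>F1. c1 g \<in> poly_ring V"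
    using assms(1) unfolding gen_ideal_def by blast
  obtain F2 c2 where 2: "q = (\<Sum>g\<in>F2. c2 g * g)" "finite F2" "F2 \<subseteq> G" "\<forall>g\<in>F2. c2 g \<in> poly_ring V"
    using assms(2) unfolding gen_ideal_def by blast
  define c where "c g = (if g \<in> F1 then c1 g else 0) + (if g \<in> F2 then c2 g else 0)" for g
  have "(\<Sum>g\<in>F1 \<union> F2. c g * g) = (\<Sum>g\<in>F1 \<union> F2. (if g \<in> F1 then c1 g * g else 0)) + (\<Sum>g\<in>F1 \<union> F2. (if g \<in> F2 then c2 g * g else 0))"
  proof -
    have "c g * g = (if g \<in> F1 then c1 g * g else 0) + (if g \<in> F2 then c2 g * g else 0)" for g
      by (simp add: c_def distrib_right)
    then show ?thesis by (simp add: sum.distrib)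
  qed
  also have "\<dots> = p + q"
  proof -
    have a: "(\<Sum>g\<in>F1 \<union> F2. (if g \<in> F1 then c1 g * g else 0)) = p"
      unfolding 1(1) using 1(2) 2(2) by (intro sum.mono_neutral_cong_right) auto
    have b: "(\<Sum>g\<in>F1 \<union> F2. (if g \<in> F2 then c2 g * g else 0)) = q"
      unfolding 2(1) using 1(2) 2(2) by (intro sum.mono_neutral_cong_right) auto
    show ?thesis using a b by simp
  qed
  finally have "p + q = (\<Sum>g\<in>F1 \<union> F2. c g * g)" by simp
  moreover have "\<forall>g\<in>F1 \<union> F2. c g \<in> poly_ring V"
    using 1 2 unfolding c_def by (auto intro!: poly_ring_add)
  ultimately show ?thesis using 1 2 unfolding gen_ideal_def
    by (intro CollectI exI[of _ "F1 \<union> F2"] exI[of _ c]) auto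
qed

lemma gen_ideal_mult:
  assumes "p \<in> gen_ideal V G" "r \<in> poly_ring V"
  shows "r * p \<in> gen_ideal V G"
proof -
  obtain F c where 1: "p = (\<Sum>g\<in>F. c g * g)" "finite F" "F \<subseteq> G" "\<forall>g\<in>F. c g \<in> poly_ring V"
    using assms(1) unfolding gen_ideal_def by blast
  have "r * p = (\<Sum>g\<in>F. (r * c g) * g)" by (simp add: 1 sum_distrib_left mult.assoc)
  moreover have "\<forall>g\<in>F. r * c g \<in> poly_ring V" using 1 assms(2) by (auto intro: poly_ring_mult)
  ultimately show ?thesis using 1 unfolding gen_ideal_def
    by (intro CollectI exI[of _ F] exI[of _ "\<lambda>g. r * c g"]) auto
qed

lemma gen_ideal_uminus:
  assumes "p \<in> gen_ideal V G"
  shows "- p \<in> gen_ideal V G"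
proof -
  have "-1 \<in> poly_ring V" by (simp add: poly_ring_def mvars_def keys_minus)
  from gen_ideal_mult[OF assms this] show ?thesis by simp
qed

lemma gen_ideal_diff:
  "p \<in> gen_ideal V G \<Longrightarrow> q \<in> gen_ideal V G \<Longrightarrow> p - q \<in> gen_ideal V G"
  using gen_ideal_add gen_ideal_uminus by (metis diff_conv_add_uminus)

lemma gen_ideal_sub_poly_ring:
  assumes "G \<subseteq> poly_ring V" "p \<in> gen_ideal V G" shows "p \<in> poly_ring V"
proof -
  obtain F c where 1: "p = (\<Sum>g\<in>F. c g * g)" "finite F" "F \<subseteq> G" "\<forall>g\<in>F. c g \<in> poly_ring V"
    using assms(2) unfolding gen_ideal_def by blast
  show ?thesis unfolding 1(1) using 1 assms(1) by (auto intro!: poly_ring_sum poly_ring_mult)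
qed



definition deg :: "('a \<Rightarrow>\<^sub>0 nat) \<Rightarrow> nat" where "deg m = sum (lk m) (ks m)"

lemma deg_superset: "finite S \<Longrightarrow> ks m \<subseteq> S \<Longrightarrow> deg m = sum (lk m) S"
  unfolding deg_def by (rule sum.mono_neutral_left) (auto simp: in_keys_iff)

lemma deg_add: "deg (a + b) = deg a + deg b"
proof -
  have "deg (a + b) = sum (lk (a+b)) (ks a \<union> ks b)"
    using keys_add[of a b] by (intro deg_superset) auto
  also have "\<dots> = sum (lk a) (ks a \<union> ks b) + sum (lk b) (ks a \<union> ks b)"
    by (simp add: lookup_add sum.distrib)
  also have "\<dots> = deg a + deg b" by (simp add: deg_superset[symmetric])
  finally show ?thesis .
qed

lemma deg_single1[simp]: "deg (sg w c) = c"
  unfolding deg_def by simp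

lemma deg_zero_iff: "deg m = 0 \<longleftrightarrow> m = 0"
  unfolding deg_def by (auto simp: in_keys_iff intro!: poly_mapping_eqI)

lemma decomp: "w \<in> ks (m :: 'a \<Rightarrow>\<^sub>0 nat) \<Longrightarrow> m = (m - sg w 1) + sg w 1"
  by (rule poly_mapping_eqI) (auto simp: lookup_add lookup_minus lookup_single when_def in_keys_iff)

lemma decomp_keys: "ks ((m :: 'a \<Rightarrow>\<^sub>0 nat) - sg w 1) \<subseteq> ks m"
  by (auto simp: in_keys_iff lookup_minus)

lemma keys_add_nat: "ks ((a :: 'a \<Rightarrow>\<^sub>0 nat) + b) = ks a \<union> ks b"
  by (auto simp: in_keys_iff lookup_add)

lemma mono_induct[case_names zero step]:
  assumes "P 0" "\<And>m w. P m \<Longrightarrow> P (m + sg w 1)"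
  shows "P (m :: 'a \<Rightarrow>\<^sub>0 nat)"
proof (induction "deg m" arbitrary: m rule: less_induct)
  case less
  show ?case
  proof (cases "m = 0")
    case True then show ?thesis using assms(1) by simp
  next
    case False
    then obtain w where w: "w \<in> ks m" by (metis keys_eq_empty ex_in_conv)
    define m' where "m' = m - sg w 1"
    have m: "m = m' + sg w 1" unfolding m'_def using decomp[OF w] .
    have "deg m' < deg m" using m deg_add[of m' "sg w 1"] by simp
    then have "P m'" by (rule less)
    then show ?thesis using assms(2) m by metis
  qed
qed

definition push :: "('a \<Rightarrow> 'b) \<Rightarrow> ('a \<Rightarrow>\<^sub>0 nat) \<Rightarrow> ('b \<Rightarrow>\<^sub>0 nat)" where
  "push f m = (\<Sum>w\<in>ks m. sg (f w) (lk m w))"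

lemma push_superset: "finite S \<Longrightarrow> ks m \<subseteq> S \<Longrightarrow> push f m = (\<Sum>w\<in>S. sg (f w) (lk m w))"
  unfolding push_def by (rule sum.mono_neutral_left) (auto simp: in_keys_iff)

lemma push_add: "push f (a + b) = push f a + push f b"
proof -
  have "push f (a + b) = (\<Sum>w\<in>ks a \<union> ks b. sg (f w) (lk (a+b) w))"
    using keys_add[of a b] by (intro push_superset) auto
  also have "\<dots> = (\<Sum>w\<in>ks a \<union> ks b. sg (f w) (lk a w)) + (\<Sum>w\<in>ks a \<union> ks b. sg (f w) (lk b w))"
    by (simp add: lookup_add single_add sum.distrib)
  also have "\<dots> = push f a + push f b" by (simp add: push_superset[symmetric])
  finally show ?thesis .
qed

lemma push_zero[simp]: "push f 0 = 0" unfolding push_def by simp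
lemma push_single[simp]: "push f (sg w c) = sg (f w) c" unfolding push_def by simp

lemma push_eq_zero: "push f m = 0 \<Longrightarrow> m = 0"
proof (induction m rule: mono_induct)
  case (step m w)
  have "lk (push f (m + sg w 1)) (f w) \<noteq> 0" by (simp add: push_add lookup_add)
  then show ?case using step.prems by simp
qed simp

lemma push_lookup_ex: "lk (push f m) a \<noteq> 0 \<Longrightarrow> \<exists>w\<in>ks m. f w = a"
proof (induction m rule: mono_induct)
  case (step m w)
  show ?case
  proof (cases "f w = a")
    case True then show ?thesis by (auto simp: keys_add_nat)
  next
    case False
    then have "lk (push f m) a \<noteq> 0" using step.prems by (simp add: push_add lookup_add lookup_single)
    then show ?thesis using step.IH by (auto simp: keys_add_nat)
  qed
qed simp

lemma keys_push: "ks m \<subseteq> S \<Longrightarrow> ks (push f m) \<subseteq> f ` S"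
proof
  fix x assume "ks m \<subseteq> S" "x \<in> ks (push f m)"
  then show "x \<in> f ` S" using push_lookup_ex[of f m x] unfolding in_keys_iff[symmetric] by blast
qed

lemma mono_image_superset: "finite S \<Longrightarrow> ks m \<subseteq> S \<Longrightarrow> mono_image m = (\<lambda>x. \<Sum>u\<in>S. lk m u * u x)"
  unfolding mono_image_def by (rule ext, rule sum.mono_neutral_left) (auto simp: in_keys_iff)

lemma mono_image_add: "mono_image (a + b) x = mono_image a x + mono_image b x"
proof -
  have "mono_image (a + b) x = (\<Sum>u\<in>ks a \<union> ks b. lk (a+b) u * u x)"
    using keys_add[of a b] by (subst mono_image_superset[where S="ks a \<union> ks b"]) auto
  also have "\<dots> = (\<Sum>u\<in>ks a \<union> ks b. lk a u * u x) + (\<Sum>u\<in>ks a \<union> ks b. lk b u * u x)"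
    by (simp add: lookup_add sum.distrib distrib_right)
  also have "\<dots> = mono_image a x + mono_image b x"
    by (simp add: mono_image_superset[of "ks a \<union> ks b"])
  finally show ?thesis .
qed

lemma mono_image_zero[simp]: "mono_image 0 x = 0" unfolding mono_image_def by simp
lemma mono_image_single[simp]: "mono_image (sg u c) x = c * u x" unfolding mono_image_def by simp

lemma mono_image_ex: "mono_image m x \<noteq> 0 \<Longrightarrow> \<exists>z\<in>ks m. z x \<noteq> 0"
proof (induction m rule: mono_induct)
  case (step m w)
  then show ?case by (cases "w x = 0") (auto simp: mono_image_add keys_add_nat)
qed simp

lemma markov:
  fixes G :: "('v, 'k::field) mpoly set"
  assumes "\<And>g. g \<in> G \<Longrightarrow> \<exists>a b. (a, b) \<in> R \<and> g = sg a 1 - sg b 1"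
    and "sg x 1 - sg y 1 \<in> gen_ideal V G"
  shows "(x, y) \<in> ({(t + a, t + b) | t a b. (a, b) \<in> R} \<union> {(t + a, t + b) | t a b. (a, b) \<in> R}\<inverse>)\<^sup>*"
proof -
  let ?E = "{(t + a, t + b) | t a b. (a, b) \<in> R} \<union> {(t + a, t + b) | t a b. (a, b) \<in> R}\<inverse>"
  define C where "C = {z. (x, z) \<in> ?E\<^sup>*}"
  define \<phi> where "\<phi> z = (if z \<in> C then (1::'k) else 0)" for z
  have inv: "\<phi> (t + a) = \<phi> (t + b)" if "(a, b) \<in> R" for t a b
  proof -
    have "(t + a, t + b) \<in> ?E" "(t + b, t + a) \<in> ?E" using that by blast+
    then have "t + a \<in> C \<longleftrightarrow> t + b \<in> C" unfolding C_def
      using rtrancl.rtrancl_into_rtrancl[of x "t + a" ?E "t + b"]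
        rtrancl.rtrancl_into_rtrancl[of x "t + b" ?E "t + a"] by blast
    then show ?thesis unfolding \<phi>_def by simp
  qed
  have "Lf \<phi> (sg x 1 - sg y 1) = 0"
    by (rule Lf_ideal[OF _ assms(2)]) (use assms(1) inv in blast)
  then have "\<phi> y = 1" by (simp add: Lf_diff \<phi>_def C_def)
  then show ?thesis unfolding \<phi>_def C_def by (auto split: if_splits)
qed



lemma Yvar_mult: "(Yvar u1 * Yvar u2 :: ('a, 'k::comm_ring_1) mpoly) = sg (sg u1 1 + sg u2 1) 1"
  unfolding Yvar_def by (simp add: mult_single)

lemma DS_sum:
  assumes "u1 i > u2 i" "u2 j > u1 j"
    "v1 = (\<lambda>x. if x = j then u1 x + 1 else if x = i then u1 x - 1 else u1 x)"
    "v2 = (\<lambda>x. if x = i then u2 x + 1 else if x = j then u2 x - 1 else u2 x)"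
  shows "u1 x + u2 x = v1 x + (v2 x :: nat)"
proof -
  have "i \<noteq> j" using assms(1,2) by auto
  then show ?thesis using assms by auto
qed

lemma DS_form:
  assumes "g \<in> (double_swap_binomials Bx :: ('a \<Rightarrow> nat, 'k::comm_ring_1) mpoly set)"
  shows "\<exists>u1 u2 v1 v2. u1 \<in> Bx \<and> u2 \<in> Bx \<and> v1 \<in> Bx \<and> v2 \<in> Bx \<and>
     g = sg (sg u1 1 + sg u2 1) 1 - sg (sg v1 1 + sg v2 1) 1 \<and> (\<forall>x. u1 x + u2 x = v1 x + v2 x)"
proof -
  from assms obtain u1 u2 v1 v2 i j where
    h: "g = Yvar u1 * Yvar u2 - Yvar v1 * Yvar v2" "u1 \<in> Bx" "u2 \<in> Bx" "v1 \<in> Bx" "v2 \<in> Bx"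
       "u1 i > u2 i" "u2 j > u1 j"
       "v1 = (\<lambda>x. if x = j then u1 x + 1 else if x = i then u1 x - 1 else u1 x)"
       "v2 = (\<lambda>x. if x = i then u2 x + 1 else if x = j then u2 x - 1 else u2 x)"
    unfolding double_swap_binomials_def by blast
  have "\<forall>x. u1 x + u2 x = v1 x + v2 x" using DS_sum[OF h(6-9)] by blast
  then show ?thesis using h by (auto simp: Yvar_mult)
qed

lemma DS_poly_ring: "(double_swap_binomials Bx :: ('a \<Rightarrow> nat, 'k::comm_ring_1) mpoly set) \<subseteq> poly_ring Bx"
proof
  fix g :: "('a \<Rightarrow> nat, 'k) mpoly" assume "g \<in> double_swap_binomials Bx"
  then obtain u1 u2 v1 v2 where h: "u1 \<in> Bx" "u2 \<in> Bx" "v1 \<in> Bx" "v2 \<in> Bx"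
     "g = sg (sg u1 1 + sg u2 1) 1 - sg (sg v1 1 + sg v2 1) 1" using DS_form by blast
  show "g \<in> poly_ring Bx" unfolding h(5)
    by (intro poly_ring_diff poly_ring_single) (use h in \<open>auto simp: keys_add_nat\<close>)
qed

lemma J_sub_I: "gen_ideal Bx (double_swap_binomials Bx) \<subseteq> (toric_ideal Bx :: ('a \<Rightarrow> nat, 'k::comm_ring_1) mpoly set)"
proof
  fix p :: "('a \<Rightarrow> nat, 'k) mpoly" assume p: "p \<in> gen_ideal Bx (double_swap_binomials Bx)"
  have "p \<in> poly_ring Bx" using gen_ideal_sub_poly_ring[OF DS_poly_ring p] .
  moreover have "toric_image p e = 0" for e
  proof -
    have "Lf (\<lambda>t. if mono_image t = e then 1 else 0) p = (0::'k)"
    proof (rule Lf_ideal[OF _ p])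
      fix g :: "('a \<Rightarrow> nat, 'k) mpoly" assume "g \<in> double_swap_binomials Bx"
      then obtain u1 u2 v1 v2 where h:
        "g = sg (sg u1 1 + sg u2 1) 1 - sg (sg v1 1 + sg v2 1) 1" "\<forall>x. u1 x + u2 x = v1 x + v2 x"
        using DS_form by blast
      have "mono_image (t + (sg u1 1 + sg u2 1)) = mono_image (t + (sg v1 1 + sg v2 1))" for t
        by (rule ext) (simp add: mono_image_add h(2))
      then show "\<exists>a b. g = sg a 1 - sg b 1 \<and>
          (\<forall>t. (if mono_image (t + a) = e then 1 else 0) = (if mono_image (t + b) = e then 1 else (0::'k)))"
        using h(1) by metis
    qed
    then show ?thesis by (simp add: toric_image_Lf)
  qed
  ultimately show "p \<in> toric_ideal Bx" unfolding toric_ideal_def by auto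
qed

lemma gen_swap:
  assumes "w1 \<in> Bx" "w2 \<in> Bx" "w1' \<in> Bx" "w2' \<in> Bx" "w1 p > w2 p" "w2 q > w1 q"
    "w1' = (\<lambda>x. if x = q then w1 x + 1 else if x = p then w1 x - 1 else w1 x)"
    "w2' = (\<lambda>x. if x = p then w2 x + 1 else if x = q then w2 x - 1 else w2 x)"
    "ks m0 \<subseteq> Bx"
  shows "sg (m0 + sg w1 1 + sg w2 1) 1 - sg (m0 + sg w1' 1 + sg w2' 1) 1
           \<in> (gen_ideal Bx (double_swap_binomials Bx) :: ('a \<Rightarrow> nat, 'k::comm_ring_1) mpoly set)"
    and "mono_image (m0 + sg w1 1 + sg w2 1) x = mono_image (m0 + sg w1' 1 + sg w2' 1) x"
proof -
  have "(Yvar w1 * Yvar w2 - Yvar w1' * Yvar w2' :: ('a \<Rightarrow> nat, 'k) mpoly) \<in> double_swap_binomials Bx"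
    unfolding double_swap_binomials_def
    by (rule CollectI, intro exI[of _ w1] exI[of _ w2] exI[of _ w1'] exI[of _ w2'] exI[of _ p] exI[of _ q])
       (use assms in simp)
  then have "sg m0 1 * (Yvar w1 * Yvar w2 - Yvar w1' * Yvar w2') \<in> (gen_ideal Bx (double_swap_binomials Bx) :: ('a \<Rightarrow> nat, 'k) mpoly set)"
    by (intro gen_ideal_mult gen_ideal_gen poly_ring_single assms(9))
  then show "sg (m0 + sg w1 1 + sg w2 1) 1 - sg (m0 + sg w1' 1 + sg w2' 1) 1
           \<in> (gen_ideal Bx (double_swap_binomials Bx) :: ('a \<Rightarrow> nat, 'k::comm_ring_1) mpoly set)"
    by (simp add: Yvar_mult right_diff_distrib mult_single add.assoc)
  show "mono_image (m0 + sg w1 1 + sg w2 1) x = mono_image (m0 + sg w1' 1 + sg w2' 1) x"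
    using DS_sum[OF assms(5-8)] by (simp add: mono_image_add)
qed



lemma mb_le1: "matroid_bases {0..<n} B \<Longrightarrow> u \<in> B \<Longrightarrow> u i \<le> 1"
proof -
  assume "matroid_bases {0..<n} B" "u \<in> B"
  then have "(\<forall>x. x \<notin> {0..<n} \<longrightarrow> u x = 0) \<and> (\<forall>x\<in>{0..<n}. u x \<le> 1)"
    unfolding matroid_bases_def by blast
  then show ?thesis by (cases "i \<in> {0..<n}") auto
qed

lemma ground_iff: "(i, c) \<in> alpha_ground n k \<longleftrightarrow> i < n \<and> c \<in> {1..k i}"
  unfolding alpha_ground_def by auto

lemma finite_ground: "finite (alpha_ground n k)"
proof -
  have "alpha_ground n k \<subseteq> (SIGMA i:{..<n}. {1..k i})" unfolding alpha_ground_def by auto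
  then show ?thesis by (rule finite_subset) auto
qed

lemma ab_zero: "w \<in> alpha_bases n k B \<Longrightarrow> x \<notin> alpha_ground n k \<Longrightarrow> w x = 0"
  unfolding alpha_bases_def by (cases x) auto
lemma ab_pi0: "w \<in> alpha_bases n k B \<Longrightarrow> pi0 k w \<in> B"
  unfolding alpha_bases_def by auto
lemma ab_mem: "(\<And>x. x \<notin> alpha_ground n k \<Longrightarrow> w x = 0) \<Longrightarrow> pi0 k w \<in> B \<Longrightarrow> w \<in> alpha_bases n k B"
  unfolding alpha_bases_def by auto

lemma ab_row_le: "w \<in> alpha_bases n k B \<Longrightarrow> w (i, c) \<le> pi0 k w i"
proof (cases "(i, c) \<in> alpha_ground n k")
  case True
  then have "c \<in> {1..k i}" by (simp add: ground_iff)
  then show ?thesis unfolding pi0_def using member_le_sum[of c "{1..k i}" "\<lambda>j. w (i, j)"] by simp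
next
  case False
  assume "w \<in> alpha_bases n k B" then show ?thesis using ab_zero False by fastforce
qed

lemma ab_le1: "matroid_bases {0..<n} B \<Longrightarrow> w \<in> alpha_bases n k B \<Longrightarrow> w (i, c) \<le> 1"
proof -
  assume "matroid_bases {0..<n} B" "w \<in> alpha_bases n k B"
  then show ?thesis using ab_row_le[of w n k B i c] mb_le1[of n B "pi0 k w" i] ab_pi0[of w n k B] by simp
qed

lemma ab_row_unique:
  assumes "matroid_bases {0..<n} B" "w \<in> alpha_bases n k B" "w (i, a) \<noteq> 0" "w (i, b) \<noteq> 0"
  shows "a = b"
proof (rule ccontr)
  assume ne: "a \<noteq> b"
  have "(i, a) \<in> alpha_ground n k" using ab_zero[OF assms(2), of "(i, a)"] assms(3) by blast
  then have a: "a \<in> {1..k i}" by (simp add: ground_iff)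
  have "(i, b) \<in> alpha_ground n k" using ab_zero[OF assms(2), of "(i, b)"] assms(4) by blast
  then have b: "b \<in> {1..k i}" by (simp add: ground_iff)
  have "w (i, a) + w (i, b) = (\<Sum>j\<in>{a, b}. w (i, j))" using ne by simp
  also have "\<dots> \<le> pi0 k w i" unfolding pi0_def using a b by (intro sum_mono2) auto
  also have "\<dots> \<le> 1" using mb_le1[OF assms(1) ab_pi0[OF assms(2)]] .
  finally show False using assms(3,4) by simp
qed

lemma ab_row_ex: "pi0 k w i \<noteq> 0 \<Longrightarrow> \<exists>c\<in>{1..k i}. w (i, c) \<noteq> 0"
proof -
  assume "pi0 k w i \<noteq> 0"
  then have "(\<Sum>j\<in>{1..k i}. w (i, j)) \<noteq> 0" unfolding pi0_def by simp
  then show ?thesis by (meson sum.neutral)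
qed

lemma ab_row_zero: "w \<in> alpha_bases n k B \<Longrightarrow> pi0 k w i = 0 \<Longrightarrow> w (i, c) = 0"
  using ab_row_le[of w n k B i c] by simp

lemma pi0_change1:
  assumes "c \<in> {1..k i}" "\<And>j. j \<noteq> c \<Longrightarrow> g (i, j) = w (i, j)"
  shows "pi0 k g i + w (i, c) = pi0 k w i + g (i, c)"
proof -
  have "pi0 k g i = g (i, c) + (\<Sum>j\<in>{1..k i} - {c}. g (i, j))"
    unfolding pi0_def using assms(1) by (simp add: sum.remove)
  moreover have "pi0 k w i = w (i, c) + (\<Sum>j\<in>{1..k i} - {c}. w (i, j))"
    unfolding pi0_def using assms(1) by (simp add: sum.remove)
  moreover have "(\<Sum>j\<in>{1..k i} - {c}. g (i, j)) = (\<Sum>j\<in>{1..k i} - {c}. w (i, j))"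
    using assms(2) by (intro sum.cong) auto
  ultimately show ?thesis by simp
qed

lemma pi0_same: "(\<And>j. g (i, j) = w (i, j)) \<Longrightarrow> pi0 k g i = pi0 k w i"
  unfolding pi0_def by simp

lemma pi0_change2:
  assumes "a \<in> {1..k i}" "b \<in> {1..k i}" "a \<noteq> b" "\<And>j. j \<noteq> a \<Longrightarrow> j \<noteq> b \<Longrightarrow> g (i, j) = w (i, j)"
  shows "pi0 k g i + w (i, a) + w (i, b) = pi0 k w i + g (i, a) + g (i, b)"
proof -
  define h where "h = w((i, a) := g (i, a))"
  have 1: "pi0 k h i + w (i, a) = pi0 k w i + h (i, a)"
    by (rule pi0_change1[of a k i h w]) (use assms(1) in \<open>simp_all add: h_def\<close>)
  have 2: "pi0 k g i + h (i, b) = pi0 k h i + g (i, b)"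
    by (rule pi0_change1[of b k i g h]) (use assms in \<open>auto simp: h_def\<close>)
  have "h (i, a) = g (i, a)" "h (i, b) = w (i, b)" using assms(3) by (auto simp: h_def)
  then show ?thesis using 1 2 by simp
qed

lemma push_cancel:
  assumes "ks m \<subseteq> S" "push f m = t + sg u 1"
  obtains w m1 where "w \<in> ks m" "f w = u" "m = m1 + sg w 1" "push f m1 = t" "ks m1 \<subseteq> ks m"
proof -
  have "lk (push f m) u \<noteq> 0" unfolding assms(2) by (simp add: lookup_add)
  then obtain w where w: "w \<in> ks m" "f w = u" using push_lookup_ex[of f m u] by blast
  define m1 where "m1 = m - sg w 1"
  have m: "m = m1 + sg w 1" unfolding m1_def using decomp[OF w(1)] .
  have "push f m1 + sg u 1 = t + sg u 1" using assms(2) w(2) m push_add[of f m1 "sg w 1"] by simp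
  then have pm: "push f m1 = t" by simp
  have "ks m1 \<subseteq> ks m" unfolding m1_def by (rule decomp_keys)
  from that[OF w m pm this] show ?thesis .
qed



lemma I_sub_J:
  fixes G :: "('a \<Rightarrow> nat, 'k::comm_ring_1) mpoly set"
  assumes core: "\<And>m1 m2. ks m1 \<subseteq> Bx \<Longrightarrow> ks m2 \<subseteq> Bx \<Longrightarrow> mono_image m1 = mono_image m2 \<Longrightarrow>
      sg m1 1 - sg m2 1 \<in> gen_ideal Bx G"
  shows "toric_ideal Bx \<subseteq> gen_ideal Bx G"
proof -
  have "\<forall>p. card (ks p) = N \<longrightarrow> p \<in> toric_ideal Bx \<longrightarrow> p \<in> gen_ideal Bx G" for N
  proof (induction N rule: less_induct)
    case (less N)
    show ?case
    proof (intro allI impI)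
      fix p :: "('a \<Rightarrow> nat, 'k) mpoly"
      assume cN: "card (ks p) = N" and pI: "p \<in> toric_ideal Bx"
      have pR: "mvars p \<subseteq> Bx" and pT: "\<And>e. toric_image p e = 0"
        using pI unfolding toric_ideal_def poly_ring_def by auto
      show "p \<in> gen_ideal Bx G"
      proof (cases "p = 0")
        case True then show ?thesis by (simp add: gen_ideal_zero)
      next
        case False
        then obtain m where m: "m \<in> ks p" by (metis keys_eq_empty ex_in_conv)
        define c where "c = lk p m"
        have c0: "c \<noteq> 0" using m unfolding c_def by (simp add: in_keys_iff)
        define e where "e = mono_image m"
        have "(\<Sum>m'\<in>{m' \<in> ks p. mono_image m' = e}. lk p m') = 0"
          using pT[of e] unfolding toric_image_def by simp
        moreover have mS: "m \<in> {m' \<in> ks p. mono_image m' = e}" using m e_def by simp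
        ultimately have "\<exists>m2 \<in> {m' \<in> ks p. mono_image m' = e}. m2 \<noteq> m"
        proof -
          assume s: "(\<Sum>m'\<in>{m' \<in> ks p. mono_image m' = e}. lk p m') = 0"
          show ?thesis
          proof (rule ccontr)
            assume "\<not> ?thesis"
            then have "{m' \<in> ks p. mono_image m' = e} = {m}" using mS by blast
            then show False using s c0 unfolding c_def by simp
          qed
        qed
        then obtain m2 where m2: "m2 \<in> ks p" "mono_image m2 = e" "m2 \<noteq> m" by blast
        have km: "ks m \<subseteq> Bx" using pR m unfolding mvars_def by blast
        have km2: "ks m2 \<subseteq> Bx" using pR m2(1) unfolding mvars_def by blast
        define q where "q = sg m c - sg m2 c"
        have "q = sg 0 c * (sg m 1 - sg m2 1)"
          unfolding q_def by (simp add: right_diff_distrib mult_single)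
        moreover have "sg m 1 - sg m2 1 \<in> gen_ideal Bx G" using core[OF km km2] m2(2) e_def by simp
        ultimately have qJ: "q \<in> gen_ideal Bx G"
          by (simp add: gen_ideal_mult poly_ring_single)
        define p' where "p' = p - q"
        have lk': "lk p' x = lk p x - (c when m = x) + (c when m2 = x)" for x
          unfolding p'_def q_def by (simp add: lookup_minus lookup_single)
        have kp': "ks p' \<subseteq> ks p - {m}"
        proof
          fix x assume x: "x \<in> ks p'"
          then have "lk p' x \<noteq> 0" by (simp add: in_keys_iff)
          then have "x \<noteq> m" using lk'[of m] m2(3) c_def by auto
          moreover have "x \<in> ks p"
          proof (rule ccontr)
            assume "x \<notin> ks p"
            then have "lk p x = 0" "x \<noteq> m2" "x \<noteq> m" using m m2(1) by (auto simp: in_keys_iff)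
            then have "lk p' x = 0" using lk'[of x] by simp
            then show False using x by (simp add: in_keys_iff)
          qed
          ultimately show "x \<in> ks p - {m}" by simp
        qed
        have "card (ks p') < N"
          using cN kp' m by (metis card_Diff1_less card_mono finite_Diff finite_keys le_less_trans)
        moreover have "p' \<in> toric_ideal Bx"
        proof -
          have "mvars p' \<subseteq> Bx" using mvars_keys[of p' p] kp' pR by blast
          moreover have "toric_image p' e' = 0" for e'
            unfolding toric_image_Lf p'_def q_def using pT[of e']
            by (simp add: toric_image_Lf Lf_diff m2(2) e_def)
          ultimately show ?thesis unfolding toric_ideal_def poly_ring_def by auto
        qed
        ultimately have "p' \<in> gen_ideal Bx G" using less.IH by blast
        then have "p' + q \<in> gen_ideal Bx G" using qJ by (rule gen_ideal_add)
        then show ?thesis unfolding p'_def by simp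
      qed
    qed
  qed
  then show ?thesis by blast
qed



abbreviation "JJ n k B \<equiv> gen_ideal (alpha_bases n k B) (double_swap_binomials (alpha_bases n k B))"

lemma lift:
  fixes m :: "(nat \<times> nat \<Rightarrow> nat) \<Rightarrow>\<^sub>0 nat"
  assumes MB: "matroid_bases {0..<n} B"
    and u: "u1 \<in> B" "u2 \<in> B" "v1 \<in> B" "v2 \<in> B" "u1 i > u2 i" "u2 j > u1 j"
       "v1 = (\<lambda>x. if x = j then u1 x + 1 else if x = i then u1 x - 1 else u1 x)"
       "v2 = (\<lambda>x. if x = i then u2 x + 1 else if x = j then u2 x - 1 else u2 x)"
    and km: "ks m \<subseteq> alpha_bases n k B"
    and pm: "push (pi0 k) m = t + (sg u1 1 + sg u2 1)"
  shows "\<exists>m'. ks m' \<subseteq> alpha_bases n k B \<and> push (pi0 k) m' = t + (sg v1 1 + sg v2 1) \<and>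
     (\<forall>x. mono_image m' x = mono_image m x) \<and>
     sg m 1 - sg m' 1 \<in> (JJ n k B :: (_, 'k::comm_ring_1) mpoly set)"
proof -
  let ?B' = "alpha_bases n k B"
  have u1i: "u1 i = 1" "u2 i = 0" using u(5) mb_le1[OF MB u(1), of i] by auto
  have u2j: "u2 j = 1" "u1 j = 0" using u(6) mb_le1[OF MB u(2), of j] by auto
  have ij: "i \<noteq> j" using u1i u2j by auto
  have pm': "push (pi0 k) m = (t + sg u2 1) + sg u1 1" using pm by (simp add: ac_simps)
  obtain w1 m1 where w1: "w1 \<in> ks m" "pi0 k w1 = u1" "m = m1 + sg w1 1" "push (pi0 k) m1 = t + sg u2 1" "ks m1 \<subseteq> ks m"
    using push_cancel[OF subset_refl pm'] .
  obtain w2 m0 where w2: "w2 \<in> ks m1" "pi0 k w2 = u2" "m1 = m0 + sg w2 1" "push (pi0 k) m0 = t" "ks m0 \<subseteq> ks m1"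
    using push_cancel[OF subset_refl w1(4)] .
  have w1B: "w1 \<in> ?B'" using km w1(1) by blast
  have w2B: "w2 \<in> ?B'" using km w1(5) w2(1) by blast
  have m0B: "ks m0 \<subseteq> ?B'" using km w1(5) w2(5) by blast
  have "pi0 k w1 i \<noteq> 0" using w1(2) u1i by simp
  then obtain c where c: "c \<in> {1..k i}" "w1 (i,c) \<noteq> 0" using ab_row_ex[of k w1 i] by blast
  have c1: "w1 (i,c) = 1" using c(2) ab_le1[OF MB w1B, of i c] by simp
  have c2: "w2 (i,c) = 0" using ab_row_zero[OF w2B, of i c] w2(2) u1i by simp
  have "pi0 k w2 j \<noteq> 0" using w2(2) u2j by simp
  then obtain d where d: "d \<in> {1..k j}" "w2 (j,d) \<noteq> 0" using ab_row_ex[of k w2 j] by blast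
  have d1: "w2 (j,d) = 1" using d(2) ab_le1[OF MB w2B, of j d] by simp
  have d2: "w1 (j,d) = 0" using ab_row_zero[OF w1B, of j d] w1(2) u2j by simp
  define p where "p = (i,c)"
  define q where "q = (j,d)"
  have pq: "p \<noteq> q" using ij by (simp add: p_def q_def)
  define w1' where "w1' = (\<lambda>x. if x = q then w1 x + 1 else if x = p then w1 x - 1 else w1 x)"
  define w2' where "w2' = (\<lambda>x. if x = p then w2 x + 1 else if x = q then w2 x - 1 else w2 x)"
  have pG: "p \<in> alpha_ground n k" using ab_zero[OF w1B, of p] c1 p_def by auto
  have qG: "q \<in> alpha_ground n k" using ab_zero[OF w2B, of q] d1 q_def by auto
  have pi1: "pi0 k w1' = v1"
  proof
    fix i' show "pi0 k w1' i' = v1 i'"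
    proof (cases "i' = i")
      case True
      have "pi0 k w1' i + w1 (i,c) = pi0 k w1 i + w1' (i,c)"
        by (rule pi0_change1[of c k i w1' w1]) (use c ij in \<open>auto simp: w1'_def p_def q_def\<close>)
      then show ?thesis using True c1 w1(2) u1i u(7) ij by (simp add: w1'_def p_def q_def)
    next
      case F1: False
      show ?thesis
      proof (cases "i' = j")
        case True
        have "pi0 k w1' j + w1 (j,d) = pi0 k w1 j + w1' (j,d)"
          by (rule pi0_change1[of d k j w1' w1]) (use d ij in \<open>auto simp: w1'_def p_def q_def\<close>)
        then show ?thesis using True d2 w1(2) u2j u(7) ij by (simp add: w1'_def p_def q_def)
      next
        case False
        have "pi0 k w1' i' = pi0 k w1 i'"
          by (rule pi0_same) (use F1 False in \<open>auto simp: w1'_def p_def q_def\<close>)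
        then show ?thesis using F1 False w1(2) u(7) by simp
      qed
    qed
  qed
  have pi2: "pi0 k w2' = v2"
  proof
    fix i' show "pi0 k w2' i' = v2 i'"
    proof (cases "i' = i")
      case True
      have "pi0 k w2' i + w2 (i,c) = pi0 k w2 i + w2' (i,c)"
        by (rule pi0_change1[of c k i w2' w2]) (use c ij in \<open>auto simp: w2'_def p_def q_def\<close>)
      then show ?thesis using True c2 w2(2) u1i u(8) ij by (simp add: w2'_def p_def q_def)
    next
      case F1: False
      show ?thesis
      proof (cases "i' = j")
        case True
        have "pi0 k w2' j + w2 (j,d) = pi0 k w2 j + w2' (j,d)"
          by (rule pi0_change1[of d k j w2' w2]) (use d ij in \<open>auto simp: w2'_def p_def q_def\<close>)
        then show ?thesis using True d1 w2(2) u2j u(8) ij by (simp add: w2'_def p_def q_def)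
      next
        case False
        have "pi0 k w2' i' = pi0 k w2 i'"
          by (rule pi0_same) (use F1 False in \<open>auto simp: w2'_def p_def q_def\<close>)
        then show ?thesis using F1 False w2(2) u(8) by simp
      qed
    qed
  qed
  have w1'B: "w1' \<in> ?B'"
  proof (rule ab_mem)
    fix x assume x: "x \<notin> alpha_ground n k"
    then have "x \<noteq> p" "x \<noteq> q" using pG qG by auto
    then show "w1' x = 0" using ab_zero[OF w1B x] by (simp add: w1'_def)
  qed (simp add: pi1 u(3))
  have w2'B: "w2' \<in> ?B'"
  proof (rule ab_mem)
    fix x assume x: "x \<notin> alpha_ground n k"
    then have "x \<noteq> p" "x \<noteq> q" using pG qG by auto
    then show "w2' x = 0" using ab_zero[OF w2B x] by (simp add: w2'_def)
  qed (simp add: pi2 u(4))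
  have gt1: "w1 p > w2 p" using c1 c2 p_def by simp
  have gt2: "w2 q > w1 q" using d1 d2 q_def by simp
  note gs = gen_swap[OF w1B w2B w1'B w2'B gt1 gt2 w1'_def w2'_def m0B]
  define m' where "m' = m0 + sg w1' 1 + sg w2' 1"
  have mm: "m = m0 + sg w1 1 + sg w2 1" using w1(3) w2(3) by (simp add: ac_simps)
  have "ks m' \<subseteq> ?B'" using m0B w1'B w2'B unfolding m'_def by (auto simp: keys_add_nat)
  moreover have "push (pi0 k) m' = t + (sg v1 1 + sg v2 1)"
    unfolding m'_def using w2(4) pi1 pi2 by (simp add: push_add add.assoc)
  moreover have "\<forall>x. mono_image m' x = mono_image m x"
    using gs(2) unfolding m'_def mm by simp
  moreover have "sg m 1 - sg m' 1 \<in> (JJ n k B :: (_, 'k) mpoly set)"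
    using gs(1) unfolding m'_def mm .
  ultimately show ?thesis by blast
qed

lemma lift_rev:
  fixes m :: "(nat \<times> nat \<Rightarrow> nat) \<Rightarrow>\<^sub>0 nat"
  assumes MB: "matroid_bases {0..<n} B"
    and u: "u1 \<in> B" "u2 \<in> B" "v1 \<in> B" "v2 \<in> B" "u1 i > u2 i" "u2 j > u1 j"
       "v1 = (\<lambda>x. if x = j then u1 x + 1 else if x = i then u1 x - 1 else u1 x)"
       "v2 = (\<lambda>x. if x = i then u2 x + 1 else if x = j then u2 x - 1 else u2 x)"
    and km: "ks m \<subseteq> alpha_bases n k B"
    and pm: "push (pi0 k) m = t + (sg v1 1 + sg v2 1)"
  shows "\<exists>m'. ks m' \<subseteq> alpha_bases n k B \<and> push (pi0 k) m' = t + (sg u1 1 + sg u2 1) \<and>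
     (\<forall>x. mono_image m' x = mono_image m x) \<and>
     sg m 1 - sg m' 1 \<in> (JJ n k B :: (_, 'k::comm_ring_1) mpoly set)"
proof -
  have u1i: "u1 i = 1" "u2 i = 0" using u(5) mb_le1[OF MB u(1), of i] by auto
  have u2j: "u2 j = 1" "u1 j = 0" using u(6) mb_le1[OF MB u(2), of j] by auto
  have ij: "i \<noteq> j" using u1i u2j by auto
  have a: "v1 j > v2 j" "v2 i > v1 i" using u(7,8) u1i u2j ij by auto
  have b: "u1 = (\<lambda>x. if x = i then v1 x + 1 else if x = j then v1 x - 1 else v1 x)"
    using u(7) u1i u2j ij by (auto intro!: ext)
  have c: "u2 = (\<lambda>x. if x = j then v2 x + 1 else if x = i then v2 x - 1 else v2 x)"
    using u(8) u1i u2j ij by (auto intro!: ext)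
  show ?thesis by (rule lift[OF MB u(3,4,1,2) a b c km pm])
qed

definition RR :: "(nat \<Rightarrow> nat) set \<Rightarrow> (((nat \<Rightarrow> nat) \<Rightarrow>\<^sub>0 nat) \<times> ((nat \<Rightarrow> nat) \<Rightarrow>\<^sub>0 nat)) set" where
  "RR B = {(sg u1 1 + sg u2 1, sg v1 1 + sg v2 1) | u1 u2 v1 v2 i j.
        u1 \<in> B \<and> u2 \<in> B \<and> v1 \<in> B \<and> v2 \<in> B \<and>
        u1 i > u2 i \<and> u2 j > u1 j \<and>
        v1 = (\<lambda>x. if x = j then u1 x + 1 else if x = i then u1 x - 1 else u1 x) \<and>
        v2 = (\<lambda>x. if x = i then u2 x + 1 else if x = j then u2 x - 1 else u2 x)}"

lemma DS_RR:
  assumes "g \<in> (double_swap_binomials B :: ((nat \<Rightarrow> nat), 'k::comm_ring_1) mpoly set)"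
  shows "\<exists>a b. (a, b) \<in> RR B \<and> g = sg a 1 - sg b 1"
proof -
  from assms obtain u1 u2 v1 v2 i j where
    h: "g = Yvar u1 * Yvar u2 - Yvar v1 * Yvar v2" "u1 \<in> B" "u2 \<in> B" "v1 \<in> B" "v2 \<in> B"
       "u1 i > u2 i" "u2 j > u1 j"
       "v1 = (\<lambda>x. if x = j then u1 x + 1 else if x = i then u1 x - 1 else u1 x)"
       "v2 = (\<lambda>x. if x = i then u2 x + 1 else if x = j then u2 x - 1 else u2 x)"
    unfolding double_swap_binomials_def by blast
  have "(sg u1 1 + sg u2 1, sg v1 1 + sg v2 1) \<in> RR B"
    unfolding RR_def using h(2-9) by blast
  moreover have "g = sg (sg u1 1 + sg u2 1) 1 - sg (sg v1 1 + sg v2 1) 1" using h(1) by (simp add: Yvar_mult)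
  ultimately show ?thesis by blast
qed

lemma chain:
  assumes MB: "matroid_bases {0..<n} B"
    and r: "(mu, mu') \<in> ({(t + a, t + b) | t a b. (a, b) \<in> RR B} \<union> {(t + a, t + b) | t a b. (a, b) \<in> RR B}\<inverse>)\<^sup>*"
    and km: "ks m \<subseteq> alpha_bases n k B" and pm: "push (pi0 k) m = mu"
  shows "\<exists>m'. ks m' \<subseteq> alpha_bases n k B \<and> push (pi0 k) m' = mu' \<and>
     (\<forall>x. mono_image m' x = mono_image m x) \<and>
     sg m 1 - sg m' 1 \<in> (JJ n k B :: (_, 'k::comm_ring_1) mpoly set)"
  using r
proof (induction rule: rtrancl_induct)
  case base
  show ?case using km pm by (intro exI[of _ m]) (simp add: gen_ideal_zero)
next
  case (step y z)
  from step.IH obtain m' where m': "ks m' \<subseteq> alpha_bases n k B" "push (pi0 k) m' = y"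
     "\<forall>x. mono_image m' x = mono_image m x" "sg m 1 - sg m' 1 \<in> (JJ n k B :: (_, 'k) mpoly set)"
    by blast
  have "\<exists>m''. ks m'' \<subseteq> alpha_bases n k B \<and> push (pi0 k) m'' = z \<and>
     (\<forall>x. mono_image m'' x = mono_image m' x) \<and> sg m' 1 - sg m'' 1 \<in> (JJ n k B :: (_, 'k) mpoly set)"
  proof (cases "(y, z) \<in> {(t + a, t + b) | t a b. (a, b) \<in> RR B}")
    case True
    then obtain t a b where tab: "y = t + a" "z = t + b" "(a, b) \<in> RR B" by blast
    then obtain u1 u2 v1 v2 i j where h: "a = sg u1 1 + sg u2 1" "b = sg v1 1 + sg v2 1"
        "u1 \<in> B" "u2 \<in> B" "v1 \<in> B" "v2 \<in> B" "u1 i > u2 i" "u2 j > u1 j"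
        "v1 = (\<lambda>x. if x = j then u1 x + 1 else if x = i then u1 x - 1 else u1 x)"
        "v2 = (\<lambda>x. if x = i then u2 x + 1 else if x = j then u2 x - 1 else u2 x)"
      unfolding RR_def by blast
    have "push (pi0 k) m' = t + (sg u1 1 + sg u2 1)" using m'(2) tab(1) h(1) by simp
    from lift[OF MB h(3-10) m'(1) this] show ?thesis using tab(2) h(2) by simp
  next
    case False
    then have "(z, y) \<in> {(t + a, t + b) | t a b. (a, b) \<in> RR B}" using step.hyps(2) by blast
    then obtain t a b where tab: "z = t + a" "y = t + b" "(a, b) \<in> RR B" by blast
    then obtain u1 u2 v1 v2 i j where h: "a = sg u1 1 + sg u2 1" "b = sg v1 1 + sg v2 1"
        "u1 \<in> B" "u2 \<in> B" "v1 \<in> B" "v2 \<in> B" "u1 i > u2 i" "u2 j > u1 j"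
        "v1 = (\<lambda>x. if x = j then u1 x + 1 else if x = i then u1 x - 1 else u1 x)"
        "v2 = (\<lambda>x. if x = i then u2 x + 1 else if x = j then u2 x - 1 else u2 x)"
      unfolding RR_def by blast
    have "push (pi0 k) m' = t + (sg v1 1 + sg v2 1)" using m'(2) tab(2) h(2) by simp
    from lift_rev[OF MB h(3-10) m'(1) this] show ?thesis using tab(1) h(1) by simp
  qed
  then obtain m'' where m'': "ks m'' \<subseteq> alpha_bases n k B" "push (pi0 k) m'' = z"
     "\<forall>x. mono_image m'' x = mono_image m' x" "sg m' 1 - sg m'' 1 \<in> (JJ n k B :: (_, 'k) mpoly set)"
    by blast
  have "sg m 1 - sg m'' 1 = (sg m 1 - sg m' 1) + (sg m' 1 - sg m'' 1 :: (_, 'k) mpoly)" by simp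
  then have "sg m 1 - sg m'' 1 \<in> (JJ n k B :: (_, 'k) mpoly set)"
    using gen_ideal_add[OF m'(4) m''(4)] by simp
  then show ?case using m'' m'(3) by auto
qed



lemma align_step:
  assumes MB: "matroid_bases {0..<n} B"
    and km: "ks m \<subseteq> alpha_bases n k B" and w: "w \<in> ks m" and wt: "wt \<in> alpha_bases n k B"
    and pw: "pi0 k w = pi0 k wt" and le: "\<And>x. wt x \<le> mono_image m x"
    and ne: "w \<noteq> wt"
  shows "\<exists>m1 w1. ks m1 \<subseteq> alpha_bases n k B \<and> w1 \<in> ks m1 \<and> pi0 k w1 = pi0 k wt \<and>
     push (pi0 k) m1 = push (pi0 k) m \<and> (\<forall>x. mono_image m1 x = mono_image m x) \<and>
     sg m 1 - sg m1 1 \<in> (JJ n k B :: (_, 'k::comm_ring_1) mpoly set) \<and>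
     {x. w1 x \<noteq> wt x} \<subset> {x. w x \<noteq> wt x}"
proof -
  let ?B' = "alpha_bases n k B"
  have wB: "w \<in> ?B'" using km w by blast
  obtain x0 where x0: "w x0 \<noteq> wt x0" using ne by (auto simp: fun_eq_iff)
  obtain i c0 where ic: "x0 = (i, c0)" by (cases x0) auto
  have "pi0 k w i \<noteq> 0"
  proof
    assume z: "pi0 k w i = 0"
    then have "pi0 k wt i = 0" using pw by simp
    then show False using x0 ic ab_row_zero[OF wB z, of c0] ab_row_zero[OF wt, of i c0] by simp
  qed
  then obtain b where b: "b \<in> {1..k i}" "w (i, b) \<noteq> 0" using ab_row_ex[of k w i] by blast
  have "pi0 k wt i \<noteq> 0" using pw \<open>pi0 k w i \<noteq> 0\<close> by simp
  then obtain a where a: "a \<in> {1..k i}" "wt (i, a) \<noteq> 0" using ab_row_ex[of k wt i] by blast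
  have wb1: "w (i, b) = 1" using b(2) ab_le1[OF MB wB, of i b] by simp
  have wta1: "wt (i, a) = 1" using a(2) ab_le1[OF MB wt, of i a] by simp
  have ab: "a \<noteq> b"
  proof
    assume "a = b"
    have "w (i, c0) = wt (i, c0)"
    proof (cases "c0 = a")
      case True then show ?thesis using wb1 wta1 \<open>a = b\<close> by simp
    next
      case False
      have "w (i, c0) = 0"
      proof (rule ccontr)
        assume "w (i, c0) \<noteq> 0"
        then show False using ab_row_unique[OF MB wB _ b(2)] False \<open>a = b\<close> by blast
      qed
      moreover have "wt (i, c0) = 0"
      proof (rule ccontr)
        assume "wt (i, c0) \<noteq> 0"
        then show False using ab_row_unique[OF MB wt _ a(2)] False by blast
      qed
      ultimately show ?thesis by simp
    qed
    then show False using x0 ic by simp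
  qed
  have wa0: "w (i, a) = 0"
  proof (rule ccontr)
    assume "w (i, a) \<noteq> 0"
    then show False using ab_row_unique[OF MB wB _ b(2)] ab by blast
  qed
  have wtb0: "wt (i, b) = 0"
  proof (rule ccontr)
    assume "wt (i, b) \<noteq> 0"
    then show False using ab_row_unique[OF MB wt _ a(2)] ab by blast
  qed
  have "mono_image m (i, a) \<noteq> 0" using le[of "(i, a)"] wta1 by simp
  then obtain z where z: "z \<in> ks m" "z (i, a) \<noteq> 0" using mono_image_ex[of m "(i, a)"] by blast
  have zw: "z \<noteq> w" using z(2) wa0 by auto
  have zB: "z \<in> ?B'" using km z(1) by blast
  have za1: "z (i, a) = 1" using z(2) ab_le1[OF MB zB, of i a] by simp
  have zb0: "z (i, b) = 0"
  proof (rule ccontr)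
    assume "z (i, b) \<noteq> 0"
    then show False using ab_row_unique[OF MB zB _ z(2)] ab by blast
  qed
  define m1 where "m1 = m - sg w 1"
  have m1: "m = m1 + sg w 1" unfolding m1_def using decomp[OF w] .
  have "lk m z = lk m1 z" using m1 zw by (simp add: lookup_add lookup_single)
  then have zm1: "z \<in> ks m1" using z(1) by (simp add: in_keys_iff)
  define m0 where "m0 = m1 - sg z 1"
  have m0: "m1 = m0 + sg z 1" unfolding m0_def using decomp[OF zm1] .
  have m0k: "ks m0 \<subseteq> ks m" using decomp_keys[of m1 z] decomp_keys[of m w] unfolding m0_def m1_def by blast
  define p where "p = (i, b)"
  define q where "q = (i, a)"
  have pq: "p \<noteq> q" using ab by (simp add: p_def q_def)
  define w' where "w' = (\<lambda>x. if x = q then w x + 1 else if x = p then w x - 1 else w x)"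
  define z' where "z' = (\<lambda>x. if x = p then z x + 1 else if x = q then z x - 1 else z x)"
  have pG: "p \<in> alpha_ground n k" using ab_zero[OF wB, of p] wb1 p_def by auto
  have qG: "q \<in> alpha_ground n k" using ab_zero[OF zB, of q] za1 q_def by auto
  have pi1: "pi0 k w' = pi0 k w"
  proof
    fix i' show "pi0 k w' i' = pi0 k w i'"
    proof (cases "i' = i")
      case True
      have "pi0 k w' i + w (i, a) + w (i, b) = pi0 k w i + w' (i, a) + w' (i, b)"
        by (rule pi0_change2[of a k i b w' w]) (use a b ab in \<open>auto simp: w'_def p_def q_def\<close>)
      then show ?thesis using True wa0 wb1 ab by (simp add: w'_def p_def q_def)
    next
      case False
      show ?thesis by (rule pi0_same) (use False in \<open>auto simp: w'_def p_def q_def\<close>)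
    qed
  qed
  have pi2: "pi0 k z' = pi0 k z"
  proof
    fix i' show "pi0 k z' i' = pi0 k z i'"
    proof (cases "i' = i")
      case True
      have "pi0 k z' i + z (i, a) + z (i, b) = pi0 k z i + z' (i, a) + z' (i, b)"
        by (rule pi0_change2[of a k i b z' z]) (use a b ab in \<open>auto simp: z'_def p_def q_def\<close>)
      then show ?thesis using True za1 zb0 ab by (simp add: z'_def p_def q_def)
    next
      case False
      show ?thesis by (rule pi0_same) (use False in \<open>auto simp: z'_def p_def q_def\<close>)
    qed
  qed
  have w'B: "w' \<in> ?B'"
  proof (rule ab_mem)
    fix x assume x: "x \<notin> alpha_ground n k"
    then have "x \<noteq> p" "x \<noteq> q" using pG qG by auto
    then show "w' x = 0" using ab_zero[OF wB x] by (simp add: w'_def)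
  qed (simp add: pi1 ab_pi0[OF wB])
  have z'B: "z' \<in> ?B'"
  proof (rule ab_mem)
    fix x assume x: "x \<notin> alpha_ground n k"
    then have "x \<noteq> p" "x \<noteq> q" using pG qG by auto
    then show "z' x = 0" using ab_zero[OF zB x] by (simp add: z'_def)
  qed (simp add: pi2 ab_pi0[OF zB])
  have gt1: "w p > z p" using wb1 zb0 p_def by simp
  have gt2: "z q > w q" using za1 wa0 q_def by simp
  have m0B: "ks m0 \<subseteq> ?B'" using m0k km by blast
  note gs = gen_swap[OF wB zB w'B z'B gt1 gt2 w'_def z'_def m0B]
  define mn where "mn = m0 + sg w' 1 + sg z' 1"
  have mm: "m = m0 + sg w 1 + sg z 1" using m1 m0 by (simp add: ac_simps)
  have "ks mn \<subseteq> ?B'" using m0B w'B z'B unfolding mn_def by (auto simp: keys_add_nat)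
  moreover have "w' \<in> ks mn" unfolding mn_def by (simp add: keys_add_nat)
  moreover have "pi0 k w' = pi0 k wt" using pi1 pw by simp
  moreover have "push (pi0 k) mn = push (pi0 k) m"
    unfolding mn_def mm using pi1 pi2 by (simp add: push_add)
  moreover have "\<forall>x. mono_image mn x = mono_image m x"
    using gs(2) unfolding mn_def mm by simp
  moreover have "sg m 1 - sg mn 1 \<in> (JJ n k B :: (_, 'k) mpoly set)"
    using gs(1) unfolding mn_def mm .
  moreover have "{x. w' x \<noteq> wt x} \<subset> {x. w x \<noteq> wt x}"
  proof -
    have "{x. w' x \<noteq> wt x} \<subseteq> {x. w x \<noteq> wt x} - {p}"
    proof
      fix x assume x: "x \<in> {x. w' x \<noteq> wt x}"
      show "x \<in> {x. w x \<noteq> wt x} - {p}"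
      proof (cases "x = p \<or> x = q")
        case True then show ?thesis using x wa0 wb1 wta1 wtb0 pq by (auto simp: w'_def p_def q_def)
      next
        case False then show ?thesis using x by (simp add: w'_def)
      qed
    qed
    moreover have "p \<in> {x. w x \<noteq> wt x}" using wb1 wtb0 p_def by simp
    ultimately show ?thesis by blast
  qed
  ultimately show ?thesis by (intro exI[of _ mn] exI[of _ w']) simp
qed

lemma finite_diffset:
  assumes "w \<in> alpha_bases n k B" "wt \<in> alpha_bases n k B"
  shows "finite {x. w x \<noteq> wt x}"
proof -
  have "{x. w x \<noteq> wt x} \<subseteq> alpha_ground n k"
  proof
    fix x assume "x \<in> {x. w x \<noteq> wt x}"
    then show "x \<in> alpha_ground n k" using ab_zero[OF assms(1), of x] ab_zero[OF assms(2), of x] by (cases "x \<in> alpha_ground n k") auto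
  qed
  then show ?thesis by (rule finite_subset[OF _ finite_ground])
qed

lemma align:
  assumes MB: "matroid_bases {0..<n} B" and wt: "wt \<in> alpha_bases n k B"
  shows "ks m \<subseteq> alpha_bases n k B \<Longrightarrow> w \<in> ks m \<Longrightarrow> pi0 k w = pi0 k wt \<Longrightarrow>
     (\<And>x. wt x \<le> mono_image m x) \<Longrightarrow>
     \<exists>m'. ks m' \<subseteq> alpha_bases n k B \<and> push (pi0 k) m' = push (pi0 k) m \<and>
      (\<forall>x. mono_image m' x = mono_image m x) \<and>
      sg m 1 - sg m' 1 \<in> (JJ n k B :: (_, 'k::comm_ring_1) mpoly set) \<and> wt \<in> ks m'"
proof (induction "card {x. w x \<noteq> wt x}" arbitrary: m w rule: less_induct)
  case less
  show ?case
  proof (cases "w = wt")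
    case True
    then show ?thesis using less.prems by (intro exI[of _ m]) (simp add: gen_ideal_zero)
  next
    case False
    have wB: "w \<in> alpha_bases n k B" using less.prems(1,2) by blast
    obtain m1 w1 where h: "ks m1 \<subseteq> alpha_bases n k B" "w1 \<in> ks m1" "pi0 k w1 = pi0 k wt"
      "push (pi0 k) m1 = push (pi0 k) m" "\<forall>x. mono_image m1 x = mono_image m x"
      "sg m 1 - sg m1 1 \<in> (JJ n k B :: (_, 'k) mpoly set)" "{x. w1 x \<noteq> wt x} \<subset> {x. w x \<noteq> wt x}"
      using align_step[OF MB less.prems(1,2) wt less.prems(3) less.prems(4) False] by blast
    have "card {x. w1 x \<noteq> wt x} < card {x. w x \<noteq> wt x}"
      using h(7) finite_diffset[OF wB wt] by (rule psubset_card_mono[rotated])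
    moreover have "\<And>x. wt x \<le> mono_image m1 x"
    proof -
      fix x show "wt x \<le> mono_image m1 x" using spec[OF h(5), of x] less.prems(4)[of x] by simp
    qed
    ultimately obtain m' where m': "ks m' \<subseteq> alpha_bases n k B" "push (pi0 k) m' = push (pi0 k) m1"
      "\<forall>x. mono_image m' x = mono_image m1 x"
      "sg m1 1 - sg m' 1 \<in> (JJ n k B :: (_, 'k) mpoly set)" "wt \<in> ks m'"
      using less.hyps[OF _ h(1) h(2) h(3)] by blast
    have "sg m 1 - sg m' 1 = (sg m 1 - sg m1 1) + (sg m1 1 - sg m' 1 :: (_, 'k) mpoly)" by simp
    then have "sg m 1 - sg m' 1 \<in> (JJ n k B :: (_, 'k) mpoly set)"
      using gen_ideal_add[OF h(6) m'(4)] by simp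
    then show ?thesis using m' h by (intro exI[of _ m']) auto
  qed
qed



lemma mono_image_fun_add: "mono_image (m + sg w 1) = (\<lambda>x. mono_image m x + w x)"
  by (rule ext) (simp add: mono_image_add)

lemma pi0_add: "pi0 k (\<lambda>x. f x + g x) i = pi0 k f i + pi0 k g i"
  unfolding pi0_def by (simp add: sum.distrib)

lemma mono_image_push: "mono_image (push (pi0 k) m) i = pi0 k (mono_image m) i"
proof (induction m arbitrary: i rule: mono_induct)
  case zero
  have "mono_image (0 :: (nat \<times> nat \<Rightarrow> nat) \<Rightarrow>\<^sub>0 nat) = (\<lambda>_. 0)" by (rule ext) simp
  then show ?case by (simp add: pi0_def)
next
  case (step m w)
  show ?case by (simp add: push_add mono_image_add mono_image_fun_add pi0_add step.IH)
qed

lemma conn: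
  assumes MB: "matroid_bases {0..<n} B"
  shows "ks m2 \<subseteq> alpha_bases n k B \<Longrightarrow> ks m \<subseteq> alpha_bases n k B \<Longrightarrow>
    push (pi0 k) m = push (pi0 k) m2 \<Longrightarrow> (\<forall>x. mono_image m x = mono_image m2 x) \<Longrightarrow>
    sg m 1 - sg m2 1 \<in> (JJ n k B :: (_, 'k::comm_ring_1) mpoly set)"
proof (induction m2 arbitrary: m rule: mono_induct)
  case zero
  then have "m = 0" using push_eq_zero[of "pi0 k" m] by simp
  then show ?case by (simp add: gen_ideal_zero)
next
  case (step m2 wt)
  have wtB: "wt \<in> alpha_bases n k B" using step.prems(1) by (auto simp: keys_add_nat)
  have m2B: "ks m2 \<subseteq> alpha_bases n k B" using step.prems(1) by (auto simp: keys_add_nat)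
  have pm: "push (pi0 k) m = push (pi0 k) m2 + sg (pi0 k wt) 1" using step.prems(3) by (simp add: push_add)
  obtain w m1 where w: "w \<in> ks m" "pi0 k w = pi0 k wt" using push_cancel[OF subset_refl pm] by blast
  have le: "wt x \<le> mono_image m x" for x
    using spec[OF step.prems(4), of x] by (simp add: mono_image_add)
  obtain m'' where m'': "ks m'' \<subseteq> alpha_bases n k B" "push (pi0 k) m'' = push (pi0 k) m"
      "\<forall>x. mono_image m'' x = mono_image m x"
      "sg m 1 - sg m'' 1 \<in> (JJ n k B :: (_, 'k) mpoly set)" "wt \<in> ks m''"
    using align[OF MB wtB step.prems(2) w(1) w(2) le] by blast
  define m3 where "m3 = m'' - sg wt 1"
  have m3: "m'' = m3 + sg wt 1" unfolding m3_def using decomp[OF m''(5)] .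
  have m3B: "ks m3 \<subseteq> alpha_bases n k B" using m''(1) decomp_keys[of m'' wt] unfolding m3_def by blast
  have "push (pi0 k) m3 + sg (pi0 k wt) 1 = push (pi0 k) m2 + sg (pi0 k wt) 1"
    using m''(2) pm m3 by (simp add: push_add)
  then have pm3: "push (pi0 k) m3 = push (pi0 k) m2" by simp
  have im3: "\<forall>x. mono_image m3 x = mono_image m2 x"
  proof
    fix x
    have "mono_image m3 x + wt x = mono_image m2 x + wt x"
      using spec[OF m''(3), of x] spec[OF step.prems(4), of x] m3 by (simp add: mono_image_add)
    then show "mono_image m3 x = mono_image m2 x" by simp
  qed
  have "sg m3 1 - sg m2 1 \<in> (JJ n k B :: (_, 'k) mpoly set)" by (rule step.IH[OF m2B m3B pm3 im3])
  then have "sg (sg wt 1) 1 * (sg m3 1 - sg m2 1) \<in> (JJ n k B :: (_, 'k) mpoly set)"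
    by (rule gen_ideal_mult) (rule poly_ring_single, use wtB in simp)
  then have "sg m'' 1 - sg (m2 + sg wt 1) 1 \<in> (JJ n k B :: (_, 'k) mpoly set)"
    by (simp add: right_diff_distrib mult_single m3 add.commute)
  from gen_ideal_add[OF m''(4) this] show ?case by simp
qed

lemma core:
  fixes m1 m2 :: "(nat \<times> nat \<Rightarrow> nat) \<Rightarrow>\<^sub>0 nat"
  assumes MB: "matroid_bases {0..<n} B" and W: "white_property TYPE('k::field) B"
    and k1: "ks m1 \<subseteq> alpha_bases n k B" and k2: "ks m2 \<subseteq> alpha_bases n k B"
    and im: "mono_image m1 = mono_image m2"
  shows "sg m1 1 - sg m2 1 \<in> (JJ n k B :: (_, 'k) mpoly set)"
proof -
  define mu1 where "mu1 = push (pi0 k) m1"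
  define mu2 where "mu2 = push (pi0 k) m2"
  have "pi0 k ` alpha_bases n k B \<subseteq> B" using ab_pi0 by blast
  then have kmu1: "ks mu1 \<subseteq> B" and kmu2: "ks mu2 \<subseteq> B"
    using keys_push[OF k1, of "pi0 k"] keys_push[OF k2, of "pi0 k"] unfolding mu1_def mu2_def by blast+
  have imu: "mono_image mu1 = mono_image mu2"
    by (rule ext) (simp add: mu1_def mu2_def mono_image_push im)
  have "(sg mu1 1 - sg mu2 1 :: (_, 'k) mpoly) \<in> toric_ideal B"
  proof -
    have "(sg mu1 1 - sg mu2 1 :: (_, 'k) mpoly) \<in> poly_ring B"
      by (intro poly_ring_diff poly_ring_single kmu1 kmu2)
    moreover have "toric_image (sg mu1 1 - sg mu2 1 :: (_, 'k) mpoly) e = 0" for e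
      by (simp add: toric_image_Lf Lf_diff imu)
    ultimately show ?thesis unfolding toric_ideal_def by auto
  qed
  then have gi: "(sg mu1 1 - sg mu2 1 :: (_, 'k) mpoly) \<in> gen_ideal B (double_swap_binomials B)"
    using W unfolding white_property_def by blast
  have r: "(mu1, mu2) \<in> ({(t + a, t + b) | t a b. (a, b) \<in> RR B} \<union> {(t + a, t + b) | t a b. (a, b) \<in> RR B}\<inverse>)\<^sup>*"
    by (rule markov[OF _ gi]) (rule DS_RR)
  obtain m' where m': "ks m' \<subseteq> alpha_bases n k B" "push (pi0 k) m' = mu2"
     "\<forall>x. mono_image m' x = mono_image m1 x" "sg m1 1 - sg m' 1 \<in> (JJ n k B :: (_, 'k) mpoly set)"
    using chain[OF MB r k1 mu1_def[symmetric]] by blast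
  have "sg m' 1 - sg m2 1 \<in> (JJ n k B :: (_, 'k) mpoly set)"
    by (rule conn[OF MB k2 m'(1)]) (use m'(2,3) im in \<open>simp_all add: mu2_def\<close>)
  from gen_ideal_add[OF m'(4) this] show ?thesis by simp
qed

theorem corollary2p5:
  fixes n :: nat and k :: "nat \<Rightarrow> nat" and B :: "(nat \<Rightarrow> nat) set"
  assumes "\<forall>i<n. k i \<ge> 1"
    and "matroid_bases {0..<n} B"
    and "white_property TYPE('k::field) B"
  shows "white_property TYPE('k) (alpha_bases n k B)"
proof -
  have "toric_ideal (alpha_bases n k B) \<subseteq> (JJ n k B :: (_, 'k) mpoly set)"
    by (rule I_sub_J) (rule core[OF assms(2,3)])
  moreover have "(JJ n k B :: (_, 'k) mpoly set) \<subseteq> toric_ideal (alpha_bases n k B)"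
    by (rule J_sub_I)
  ultimately show ?thesis unfolding white_property_def by blast
qed


end
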